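(* Let $T$ be a non-abelian finite simple group and $k\geqslant 4$. Then $\mathbb{Q}_k(T)\leqslant 1-\mathbb{P}_{k+1}(T)$.
   Context: Let $T^\#=T\setminus\{1\}$, $\mathscr{S}_k$ the set of $k$-subsets of $T^\#$, $\mathrm{Aut}(T,R)$ the setwise stabiliser of $R\subseteq T^\#$ in $\mathrm{Aut}(T)$, and $\mathbb{Q}_k(T)=|\{R\in\mathscr{S}_k:\mathrm{Aut}(T,R)\neq1\}|/|\mathscr{S}_k|$. For $m\geqslant2$ let $G=W(m,T)=\{(\alpha_1,\dots,\alpha_m)\pi\in\mathrm{Aut}(T)\wr S_m:\alpha_i\mathrm{Inn}(T)\text{ all equal}\}$ act on the right coset space $\Omega=[G:D]$, $D=\{(\alpha,\dots,\alpha)\pi:\alpha\in\mathrm{Aut}(T),\pi\in S_m\}$; for $t\in T$ let $\varphi_t$ be the inner automorphism $x\mapsto t^{-1}xt$. Define $\mathbb{P}_m(T)$ to be the proportion of tuples $(t_1,\dots,t_{m-1})\in T^{m-1}$ such that $\{D,D(\varphi_{t_1},\dots,\varphi_{t_{m-1}},1)\}$ is a base for $G$ (a subset of $\Omega$ with trivial pointwise stabiliser in $G$). *)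

theory Defs
  imports "HOL-Algebra.Algebra" "HOL-Combinatorics.Permutations" Complex_Main
begin

definition inn :: "('a, 'b) monoid_scheme \<Rightarrow> 'a \<Rightarrow> ('a \<Rightarrow> 'a)" where
  "inn T t = (\<lambda>x \<in> carrier T. inv\<^bsub>T\<^esub> t \<otimes>\<^bsub>T\<^esub> x \<otimes>\<^bsub>T\<^esub> t)"

definition Inn :: "('a, 'b) monoid_scheme \<Rightarrow> ('a \<Rightarrow> 'a) set" where
  "Inn T = inn T ` carrier T"

definition ksubsets :: "('a, 'b) monoid_scheme \<Rightarrow> nat \<Rightarrow> 'a set set" where
  "ksubsets T k = {R. R \<subseteq> carrier T - {\<one>\<^bsub>T\<^esub>} \<and> card R = k}"

definition setstab :: "('a, 'b) monoid_scheme \<Rightarrow> 'a set \<Rightarrow> ('a \<Rightarrow> 'a) set" where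
  "setstab T R = {\<alpha> \<in> auto T. \<alpha> ` R = R}"

definition QQ :: "nat \<Rightarrow> ('a, 'b) monoid_scheme \<Rightarrow> real" where
  "QQ k T = real (card {R \<in> ksubsets T k. setstab T R \<noteq> {(\<lambda>x \<in> carrier T. x)}})
            / real (card (ksubsets T k))"

text \<open>Aut(T) wr S_m realised faithfully as transformations of the product set T^m
  (functions on {..<m}); (alpha_1,...,alpha_m) sigma acts by f \<mapsto> (i \<mapsto> alpha_i (f (sigma i))).\<close>
definition Xpts :: "nat \<Rightarrow> ('a, 'b) monoid_scheme \<Rightarrow> (nat \<Rightarrow> 'a) set" where
  "Xpts m T = {..<m} \<rightarrow>\<^sub>E carrier T"

definition wr_elem :: "nat \<Rightarrow> ('a, 'b) monoid_scheme \<Rightarrow> (nat \<Rightarrow> 'a \<Rightarrow> 'a) \<Rightarrow> (nat \<Rightarrow> nat)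
    \<Rightarrow> ((nat \<Rightarrow> 'a) \<Rightarrow> (nat \<Rightarrow> 'a))" where
  "wr_elem m T \<alpha> \<sigma> = (\<lambda>f \<in> Xpts m T. \<lambda>i \<in> {..<m}. \<alpha> i (f (\<sigma> i)))"

definition Wgrp :: "nat \<Rightarrow> ('a, 'b) monoid_scheme \<Rightarrow> ((nat \<Rightarrow> 'a) \<Rightarrow> (nat \<Rightarrow> 'a)) set" where
  "Wgrp m T = {wr_elem m T \<alpha> \<sigma> | \<alpha> \<sigma>. (\<forall>i<m. \<alpha> i \<in> auto T)
      \<and> (\<forall>i<m. \<forall>j<m. \<alpha> i <#\<^bsub>AutoGroup T\<^esub> Inn T = \<alpha> j <#\<^bsub>AutoGroup T\<^esub> Inn T)
      \<and> \<sigma> permutes {..<m}}"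

definition Dgrp :: "nat \<Rightarrow> ('a, 'b) monoid_scheme \<Rightarrow> ((nat \<Rightarrow> 'a) \<Rightarrow> (nat \<Rightarrow> 'a)) set" where
  "Dgrp m T = {wr_elem m T (\<lambda>_. a) \<sigma> | a \<sigma>. a \<in> auto T \<and> \<sigma> permutes {..<m}}"

text \<open>Group product, written for right actions: y * g means first y, then g.\<close>
definition wmult :: "nat \<Rightarrow> ('a, 'b) monoid_scheme \<Rightarrow> ((nat \<Rightarrow> 'a) \<Rightarrow> (nat \<Rightarrow> 'a))
    \<Rightarrow> ((nat \<Rightarrow> 'a) \<Rightarrow> (nat \<Rightarrow> 'a)) \<Rightarrow> ((nat \<Rightarrow> 'a) \<Rightarrow> (nat \<Rightarrow> 'a))" where
  "wmult m T y g = compose (Xpts m T) g y"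

definition wone :: "nat \<Rightarrow> ('a, 'b) monoid_scheme \<Rightarrow> ((nat \<Rightarrow> 'a) \<Rightarrow> (nat \<Rightarrow> 'a))" where
  "wone m T = (\<lambda>f \<in> Xpts m T. f)"

definition Dcoset :: "nat \<Rightarrow> ('a, 'b) monoid_scheme \<Rightarrow> ((nat \<Rightarrow> 'a) \<Rightarrow> (nat \<Rightarrow> 'a))
    \<Rightarrow> ((nat \<Rightarrow> 'a) \<Rightarrow> (nat \<Rightarrow> 'a)) set" where
  "Dcoset m T y = (\<lambda>d. wmult m T d y) ` Dgrp m T"

definition Omega :: "nat \<Rightarrow> ('a, 'b) monoid_scheme \<Rightarrow> ((nat \<Rightarrow> 'a) \<Rightarrow> (nat \<Rightarrow> 'a)) set set" where
  "Omega m T = Dcoset m T ` Wgrp m T"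

definition act :: "nat \<Rightarrow> ('a, 'b) monoid_scheme \<Rightarrow> ((nat \<Rightarrow> 'a) \<Rightarrow> (nat \<Rightarrow> 'a)) set
    \<Rightarrow> ((nat \<Rightarrow> 'a) \<Rightarrow> (nat \<Rightarrow> 'a)) \<Rightarrow> ((nat \<Rightarrow> 'a) \<Rightarrow> (nat \<Rightarrow> 'a)) set" where
  "act m T \<omega> g = (\<lambda>z. wmult m T z g) ` \<omega>"

definition is_base :: "nat \<Rightarrow> ('a, 'b) monoid_scheme \<Rightarrow> ((nat \<Rightarrow> 'a) \<Rightarrow> (nat \<Rightarrow> 'a)) set set \<Rightarrow> bool" where
  "is_base m T B \<longleftrightarrow> B \<subseteq> Omega m T
     \<and> {g \<in> Wgrp m T. \<forall>\<omega>\<in>B. act m T \<omega> g = \<omega>} = {wone m T}"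

definition phi_elem :: "nat \<Rightarrow> ('a, 'b) monoid_scheme \<Rightarrow> (nat \<Rightarrow> 'a) \<Rightarrow> ((nat \<Rightarrow> 'a) \<Rightarrow> (nat \<Rightarrow> 'a))" where
  "phi_elem m T t = wr_elem m T (\<lambda>i. if i < m - 1 then inn T (t i) else (\<lambda>x \<in> carrier T. x)) id"

definition PP :: "nat \<Rightarrow> ('a, 'b) monoid_scheme \<Rightarrow> real" where
  "PP m T = real (card {t \<in> {..<m - 1} \<rightarrow>\<^sub>E carrier T.
                  is_base m T {Dgrp m T, Dcoset m T (phi_elem m T t)}})
            / real (card (carrier T)) ^ (m - 1)"

end

theory Submission
  imports Defs
begin

lemma wr_apply: "f \<in> Xpts m T \<Longrightarrow> wr_elem m T \<alpha> \<sigma> f = (\<lambda>i\<in>{..<m}. \<alpha> i (f (\<sigma> i)))"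
  by (simp add: wr_elem_def)

lemma wr_ext: "wr_elem m T \<alpha> \<sigma> \<in> extensional (Xpts m T)"
  by (simp add: wr_elem_def)

lemma wr_in_X:
  assumes "\<forall>i<m. \<alpha> i \<in> carrier T \<rightarrow> carrier T" "\<sigma> permutes {..<m}" "f \<in> Xpts m T"
  shows "wr_elem m T \<alpha> \<sigma> f \<in> Xpts m T"
proof -
  have "\<sigma> i < m" if "i < m" for i using permutes_in_image[OF assms(2)] that by auto
  then show ?thesis using assms by (auto simp: wr_apply Xpts_def PiE_def Pi_def)
qed

lemma wr_inj:
  assumes "\<forall>i<m. inj_on (\<alpha> i) (carrier T)" "\<sigma> permutes {..<m}"
  shows "inj_on (wr_elem m T \<alpha> \<sigma>) (Xpts m T)"
proof (rule inj_onI)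
  fix f f' assume f: "f \<in> Xpts m T" and f': "f' \<in> Xpts m T" and eq: "wr_elem m T \<alpha> \<sigma> f = wr_elem m T \<alpha> \<sigma> f'"
  have s: "\<sigma> i < m" if "i < m" for i using permutes_in_image[OF assms(2)] that by simp
  have fi: "f (\<sigma> i) = f' (\<sigma> i)" if i: "i < m" for i
  proof -
    have "wr_elem m T \<alpha> \<sigma> f i = wr_elem m T \<alpha> \<sigma> f' i" using eq by simp
    then have e: "\<alpha> i (f (\<sigma> i)) = \<alpha> i (f' (\<sigma> i))"
      using i f f' by (simp add: wr_apply)
    have c: "f (\<sigma> i) \<in> carrier T" "f' (\<sigma> i) \<in> carrier T"
      using f f' s[OF i] unfolding Xpts_def by auto
    have inj: "inj_on (\<alpha> i) (carrier T)" using assms(1) i by simp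
    show ?thesis by (rule inj_onD[OF inj e c])
  qed
  show "f = f'" unfolding Xpts_def
  proof (rule PiE_ext)
    show "f \<in> {..<m} \<rightarrow>\<^sub>E carrier T" "f' \<in> {..<m} \<rightarrow>\<^sub>E carrier T" using f f' by (simp_all add: Xpts_def)
    fix j assume j: "j \<in> {..<m}"
    have ij: "inv_into UNIV \<sigma> j < m" using permutes_in_image[OF permutes_inv[OF assms(2)]] j by simp
    have "\<sigma> (inv_into UNIV \<sigma> j) = j" using permutes_inverses(1)[OF assms(2)] by simp
    then show "f j = f' j" using fi[OF ij] by simp
  qed
qed

lemma wr_comp:
  assumes "a \<in> carrier T \<rightarrow> carrier T" "b \<in> carrier T \<rightarrow> carrier T" "\<sigma> permutes {..<m}" "\<tau> permutes {..<m}"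
  shows "compose (Xpts m T) (wr_elem m T (\<lambda>_. a) \<sigma>) (wr_elem m T (\<lambda>_. b) \<tau>)
       = wr_elem m T (\<lambda>_. compose (carrier T) a b) (\<tau> \<circ> \<sigma>)"
proof
  fix f
  show "compose (Xpts m T) (wr_elem m T (\<lambda>_. a) \<sigma>) (wr_elem m T (\<lambda>_. b) \<tau>) f
       = wr_elem m T (\<lambda>_. compose (carrier T) a b) (\<tau> \<circ> \<sigma>) f"
  proof (cases "f \<in> Xpts m T")
    case True
    have s: "\<sigma> i < m" if "i < m" for i using permutes_in_image[OF assms(3)] that by auto
    have t: "\<tau> i < m" if "i < m" for i using permutes_in_image[OF assms(4)] that by auto
    have XX: "wr_elem m T (\<lambda>_. b) \<tau> f \<in> Xpts m T" using wr_in_X[of m "\<lambda>_. b"] assms True by auto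
    have c: "f i \<in> carrier T" if "i < m" for i using True that by (auto simp: Xpts_def)
    show ?thesis using True XX s t c assms(1,2)
      by (auto simp: compose_def wr_apply Xpts_def)
  next
    case False then show ?thesis by (simp add: compose_def wr_elem_def)
  qed
qed

lemma auto_comp:
  assumes "group T" "a \<in> auto T" "b \<in> auto T"
  shows "compose (carrier T) a b \<in> auto T"
proof -
  have "a \<otimes>\<^bsub>BijGroup (carrier T)\<^esub> b \<in> auto T"
    using subgroup.m_closed[OF group.subgroup_auto[OF assms(1)]] assms(2,3) by blast
  then show ?thesis using assms(2,3) by (simp add: BijGroup_def auto_def)
qed

lemma auto_funcset: "a \<in> auto T \<Longrightarrow> a \<in> carrier T \<rightarrow> carrier T"
  by (simp add: auto_def hom_def)

lemma auto_inj: "a \<in> auto T \<Longrightarrow> inj_on a (carrier T)"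
  by (simp add: auto_def Bij_def bij_betw_def)

lemma card_fix:
  assumes "finite S" "inj_on F S" "F ` S \<subseteq> S" shows "F ` S = S"
  using assms by (metis card_image card_subset_eq)

lemma compose_inj:
  assumes "inj_on g XX" "S \<subseteq> {z. z \<in> extensional XX \<and> z \<in> XX \<rightarrow> XX}"
  shows "inj_on (\<lambda>z. compose XX g z) S"
proof
  fix z1 z2 assume z: "z1 \<in> S" "z2 \<in> S" and eq: "compose XX g z1 = compose XX g z2"
  show "z1 = z2"
  proof (rule extensionalityI)
    show "z1 \<in> extensional XX" "z2 \<in> extensional XX" using z assms(2) by auto
    fix f assume f: "f \<in> XX"
    have "g (z1 f) = g (z2 f)" using fun_cong[OF eq, of f] f by (simp add: compose_def)
    moreover have "z1 f \<in> XX" "z2 f \<in> XX" using z assms(2) f by auto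
    ultimately show "z1 f = z2 f" using assms(1) by (meson inj_onD)
  qed
qed

lemma finite_X: "finite (carrier T) \<Longrightarrow> finite (Xpts m T)"
  by (simp add: Xpts_def finite_PiE)

lemma finite_maps:
  assumes "finite XX" "S \<subseteq> {z. z \<in> extensional XX \<and> z \<in> XX \<rightarrow> XX}" shows "finite S"
proof -
  have "S \<subseteq> XX \<rightarrow>\<^sub>E XX" using assms(2) by (auto simp: PiE_def)
  then show ?thesis using assms(1) by (meson finite_PiE finite_subset)
qed

lemma not_base_if:
  assumes grp: "group T" and fin: "finite (carrier T)"
  and a: "a \<in> auto T" and \<sigma>: "\<sigma> permutes {..<m}"
  and xw: "x = wr_elem m T \<beta> id" and \<beta>: "\<forall>i<m. \<beta> i \<in> carrier T \<rightarrow> carrier T"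
  and comm: "\<forall>i<m. \<forall>y\<in>carrier T. a (\<beta> (\<sigma> i) y) = \<beta> i (a y)"
  and ne: "wr_elem m T (\<lambda>_. a) \<sigma> \<noteq> wone m T"
  shows "\<not> is_base m T {Dgrp m T, Dcoset m T x}"
proof -
  define XX where "XX = Xpts m T"
  define g where "g = wr_elem m T (\<lambda>_. a) \<sigma>"
  have afun: "a \<in> carrier T \<rightarrow> carrier T" using a by (rule auto_funcset)
  have gD: "g \<in> Dgrp m T" unfolding g_def Dgrp_def using a \<sigma> by blast
  have gW: "g \<in> Wgrp m T" unfolding g_def Wgrp_def using a \<sigma> by blast
  have gX: "g f \<in> XX" if "f \<in> XX" for f unfolding g_def XX_def
    using wr_in_X[of m "\<lambda>_. a" T \<sigma> f] afun \<sigma> that XX_def by auto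
  have ginj: "inj_on g XX" unfolding g_def XX_def using wr_inj[of m "\<lambda>_. a" T \<sigma>] auto_inj[OF a] \<sigma> by auto
  have xX: "x f \<in> XX" if "f \<in> XX" for f unfolding xw XX_def
    using wr_in_X[of m \<beta> T id f] \<beta> permutes_id that XX_def by auto
  have sig: "\<sigma> i < m" if "i < m" for i using permutes_in_image[OF \<sigma>] that by auto
  have commute: "g (x f) = x (g f)" if f: "f \<in> XX" for f
  proof -
    have c: "f i \<in> carrier T" if "i < m" for i using f that by (auto simp: XX_def Xpts_def)
    have "g (x f) = (\<lambda>i\<in>{..<m}. a (\<beta> (\<sigma> i) (f (\<sigma> i))))"
      using xX[OF f] f sig unfolding g_def xw XX_def by (auto simp: wr_apply intro!: restrict_ext)
    also have "\<dots> = (\<lambda>i\<in>{..<m}. \<beta> i (a (f (\<sigma> i))))"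
      using comm c sig by (intro restrict_ext) auto
    also have "\<dots> = x (g f)"
      using gX[OF f] f unfolding g_def xw XX_def by (auto simp: wr_apply intro!: restrict_ext)
    finally show ?thesis .
  qed
  have Dmaps: "Dgrp m T \<subseteq> {z. z \<in> extensional XX \<and> z \<in> XX \<rightarrow> XX}"
  proof
    fix d assume "d \<in> Dgrp m T"
    then obtain b \<tau> where d: "d = wr_elem m T (\<lambda>_. b) \<tau>" "b \<in> auto T" "\<tau> permutes {..<m}"
      unfolding Dgrp_def by blast
    show "d \<in> {z. z \<in> extensional XX \<and> z \<in> XX \<rightarrow> XX}"
      using d wr_ext[of m T] wr_in_X[of m "\<lambda>_. b" T \<tau>] auto_funcset[OF d(2)] unfolding XX_def by auto
  qed
  have Dclos: "compose XX g d \<in> Dgrp m T" if dD: "d \<in> Dgrp m T" for d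
  proof -
    obtain b \<tau> where d: "d = wr_elem m T (\<lambda>_. b) \<tau>" "b \<in> auto T" "\<tau> permutes {..<m}"
      using dD unfolding Dgrp_def by blast
    have "compose XX g d = wr_elem m T (\<lambda>_. compose (carrier T) a b) (\<tau> \<circ> \<sigma>)"
      unfolding g_def XX_def d(1) using wr_comp afun auto_funcset[OF d(2)] \<sigma> d(3) by blast
    moreover have "compose (carrier T) a b \<in> auto T" using auto_comp grp a d(2) by blast
    moreover have "\<tau> \<circ> \<sigma> permutes {..<m}" using permutes_compose \<sigma> d(3) by blast
    ultimately show ?thesis unfolding Dgrp_def by blast
  qed
  have finD: "finite (Dgrp m T)" using finite_maps[OF _ Dmaps] finite_X[OF fin] XX_def by auto
  have actD: "act m T (Dgrp m T) g = Dgrp m T"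
  proof -
    have "(\<lambda>z. compose XX g z) ` Dgrp m T = Dgrp m T"
      by (rule card_fix[OF finD compose_inj[OF ginj Dmaps]]) (use Dclos in auto)
    then show ?thesis unfolding act_def wmult_def XX_def .
  qed
  define C where "C = Dcoset m T x"
  have Cdef: "C = (\<lambda>d. compose XX x d) ` Dgrp m T" unfolding C_def Dcoset_def wmult_def XX_def ..
  have Cmaps: "C \<subseteq> {z. z \<in> extensional XX \<and> z \<in> XX \<rightarrow> XX}"
    using Dmaps xX unfolding Cdef by (auto simp: compose_def)
  have finC: "finite C" unfolding Cdef using finD by simp
  have Cclos: "compose XX g c \<in> C" if cC: "c \<in> C" for c
  proof -
    obtain d where d: "d \<in> Dgrp m T" "c = compose XX x d" using cC unfolding Cdef by blast
    have "compose XX g c = compose XX x (compose XX g d)"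
    proof
      fix f show "compose XX g c f = compose XX x (compose XX g d) f"
        using commute Dmaps d by (auto simp: compose_def)
    qed
    then show ?thesis unfolding Cdef using Dclos[OF d(1)] by blast
  qed
  have actC: "act m T C g = C"
  proof -
    have "(\<lambda>z. compose XX g z) ` C = C"
      by (rule card_fix[OF finC compose_inj[OF ginj Cmaps]]) (use Cclos in auto)
    then show ?thesis unfolding act_def wmult_def XX_def .
  qed
  have "g \<in> {g \<in> Wgrp m T. \<forall>\<omega>\<in>{Dgrp m T, C}. act m T \<omega> g = \<omega>}"
    using gW actD actC by auto
  moreover have "g \<noteq> wone m T" using ne g_def by simp
  ultimately show ?thesis unfolding is_base_def C_def by blast
qed

lemma ne_wone:
  assumes "f \<in> Xpts m T" "i < m" "wr_elem m T \<alpha> \<sigma> f i \<noteq> f i"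
  shows "wr_elem m T \<alpha> \<sigma> \<noteq> wone m T"
  using assms by (auto simp: wone_def)

lemma swap_case:
  assumes grp: "group T" and fin: "finite (carrier T)" and u: "u \<in> carrier T" "u \<noteq> \<one>\<^bsub>T\<^esub>"
  and xw: "x = wr_elem m T \<beta> id" and \<beta>: "\<forall>i<m. \<beta> i \<in> carrier T \<rightarrow> carrier T"
  and ij: "i < m" "j < m" "i \<noteq> j" and eq: "\<forall>y\<in>carrier T. \<beta> i y = \<beta> j y"
  shows "\<not> is_base m T {Dgrp m T, Dcoset m T x}"
proof (rule not_base_if[OF grp fin group.id_in_auto[OF grp] permutes_swap_id[of i "{..<m}" j] xw \<beta>])
  show "i \<in> {..<m}" "j \<in> {..<m}" using ij by auto
  show "\<forall>l<m. \<forall>y\<in>carrier T. (\<lambda>x\<in>carrier T. x) (\<beta> (transpose i j l) y) = \<beta> l ((\<lambda>x\<in>carrier T. x) y)"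
  proof (intro allI impI ballI)
    fix l y assume l: "l < m" and y: "y \<in> carrier T"
    have tl: "transpose i j l < m" using l ij by (auto simp: transpose_def)
    have "\<beta> (transpose i j l) y = \<beta> l y" using eq y by (auto simp: transpose_def)
    moreover have "\<beta> (transpose i j l) y \<in> carrier T" using \<beta> tl y by auto
    ultimately show "(\<lambda>x\<in>carrier T. x) (\<beta> (transpose i j l) y) = \<beta> l ((\<lambda>x\<in>carrier T. x) y)"
      using y by simp
  qed
  define f where "f = (\<lambda>l\<in>{..<m}. if l = i then u else \<one>\<^bsub>T\<^esub>)"
  have fX: "f \<in> Xpts m T" using u grp by (auto simp: f_def Xpts_def group.is_monoid)
  show "wr_elem m T (\<lambda>_. \<lambda>x\<in>carrier T. x) (transpose i j) \<noteq> wone m T"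
  proof (rule ne_wone[OF fX ij(1)])
    have "f j \<in> carrier T" using fX ij by (auto simp: Xpts_def)
    then show "wr_elem m T (\<lambda>_. \<lambda>x\<in>carrier T. x) (transpose i j) f i \<noteq> f i"
      using fX ij u by (simp add: wr_apply f_def)
  qed
qed

lemma inn_apply: "y \<in> carrier T \<Longrightarrow> inn T s y = inv\<^bsub>T\<^esub> s \<otimes>\<^bsub>T\<^esub> y \<otimes>\<^bsub>T\<^esub> s"
  by (simp add: inn_def)

lemma stab_case:
  assumes grp: "group T" and fin: "finite (carrier T)"
  and t: "t \<in> {..<k} \<rightarrow>\<^sub>E carrier T" "inj_on t {..<k}"
  and \<alpha>: "\<alpha> \<in> setstab T (t ` {..<k})" "\<alpha> \<noteq> (\<lambda>x\<in>carrier T. x)"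
  and xw: "x = wr_elem (k+1) T \<beta> id"
  and \<beta>def: "\<beta> = (\<lambda>i. if i < k then inn T (t i) else (\<lambda>x\<in>carrier T. x))"
  shows "\<not> is_base (k+1) T {Dgrp (k+1) T, Dcoset (k+1) T x}"
proof -
  define K where "K = {..<k}"
  define R where "R = t ` K"
  have a: "\<alpha> \<in> auto T" and aR: "\<alpha> ` R = R" using \<alpha> by (auto simp: setstab_def R_def K_def)
  have tc: "t i \<in> carrier T" if "i < k" for i using t that by auto
  have RC: "R \<subseteq> carrier T" using tc by (auto simp: R_def K_def)
  define h where "h = (\<lambda>j. \<alpha> (t j))"
  have hinj: "inj_on h K" unfolding h_def
    using comp_inj_on[OF t(2)[folded K_def] inj_on_subset[OF auto_inj[OF a] RC[unfolded R_def]]]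
    by (simp add: o_def)
  have himg: "h ` K = R" using aR by (auto simp: h_def R_def image_image)
  have hb: "bij_betw h K R" using hinj himg by (simp add: bij_betw_def)
  have tb: "bij_betw t K R" using t(2) by (simp add: bij_betw_def R_def K_def)
  define \<sigma> where "\<sigma> = (\<lambda>i. if i \<in> K then inv_into K h (t i) else i)"
  have "bij_betw (inv_into K h \<circ> t) K K" using bij_betw_trans[OF tb bij_betw_inv_into[OF hb]] .
  then have "bij_betw \<sigma> K K" by (rule bij_betw_cong[THEN iffD1, rotated]) (simp add: \<sigma>_def)
  then have sK: "\<sigma> permutes K" by (rule bij_imp_permutes) (simp add: \<sigma>_def)
  then have sm: "\<sigma> permutes {..<k+1}" by (rule permutes_subset) (auto simp: K_def)
  have hs: "h (\<sigma> i) = t i" if "i \<in> K" for i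
    using that himg by (simp add: \<sigma>_def f_inv_into_f R_def)
  have sK': "\<sigma> i \<in> K" if "i \<in> K" for i using permutes_in_image[OF sK] that by simp
  have gh: "group_hom T T \<alpha>" using grp a by (auto simp: group_hom_def group_hom_axioms_def auto_def)
  have \<beta>f: "\<forall>i<k+1. \<beta> i \<in> carrier T \<rightarrow> carrier T"
    using tc grp by (auto simp: \<beta>def inn_apply group.inv_closed monoid.m_closed[OF group.is_monoid[OF grp]])
  show ?thesis
  proof (rule not_base_if[OF grp fin a sm xw \<beta>f])
    show "\<forall>i<k+1. \<forall>y\<in>carrier T. \<alpha> (\<beta> (\<sigma> i) y) = \<beta> i (\<alpha> y)"
    proof (intro allI impI ballI)
      fix i y assume i: "i < k+1" and y: "y \<in> carrier T"
      have ay: "\<alpha> y \<in> carrier T" using auto_funcset[OF a] y by auto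
      show "\<alpha> (\<beta> (\<sigma> i) y) = \<beta> i (\<alpha> y)"
      proof (cases "i < k")
        case True
        then have iK: "i \<in> K" and sk: "\<sigma> i < k" using sK' by (auto simp: K_def)
        have tsc: "t (\<sigma> i) \<in> carrier T" using tc sk by auto
        have "\<alpha> (\<beta> (\<sigma> i) y) = \<alpha> (inv\<^bsub>T\<^esub> (t (\<sigma> i)) \<otimes>\<^bsub>T\<^esub> y \<otimes>\<^bsub>T\<^esub> t (\<sigma> i))"
          using sk y by (simp add: \<beta>def inn_apply)
        also have "\<dots> = inv\<^bsub>T\<^esub> (\<alpha> (t (\<sigma> i))) \<otimes>\<^bsub>T\<^esub> \<alpha> y \<otimes>\<^bsub>T\<^esub> \<alpha> (t (\<sigma> i))"
          using tsc y grp by (simp add: group_hom.hom_mult[OF gh] group_hom.hom_inv[OF gh] group.inv_closed monoid.m_closed[OF group.is_monoid[OF grp]])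
        also have "\<dots> = \<beta> i (\<alpha> y)"
          using hs[OF iK] True ay by (simp add: h_def \<beta>def inn_apply)
        finally show ?thesis .
      next
        case False
        then have "i = k" using i by auto
        moreover have "\<sigma> k = k" by (simp add: \<sigma>_def K_def)
        ultimately show ?thesis using y ay by (simp add: \<beta>def)
      qed
    qed
    obtain y where y: "y \<in> carrier T" "\<alpha> y \<noteq> y"
    proof -
      have "\<alpha> \<in> extensional (carrier T)" using a by (simp add: auto_def Bij_def)
      moreover have "\<not> (\<forall>y\<in>carrier T. \<alpha> y = (\<lambda>x\<in>carrier T. x) y)"
        using \<alpha>(2) calculation extensionalityI[of \<alpha> "carrier T" "\<lambda>x\<in>carrier T. x"] by auto
      ultimately show thesis using that by auto
    qed
    define f where "f = (\<lambda>l\<in>{..<k+1}. y)"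
    have fX: "f \<in> Xpts (k+1) T" using y by (auto simp: f_def Xpts_def)
    show "wr_elem (k+1) T (\<lambda>_. \<alpha>) \<sigma> \<noteq> wone (k+1) T"
    proof (rule ne_wone[OF fX, of 0])
      have "\<sigma> 0 < k + 1" using permutes_in_image[OF sm, of 0] by simp
      then show "wr_elem (k+1) T (\<lambda>_. \<alpha>) \<sigma> f 0 \<noteq> f 0" using fX y by (simp add: wr_apply f_def)
    qed simp
  qed
qed

lemma base_good:
  assumes grp: "group T" and fin: "finite (carrier T)" and u: "u \<in> carrier T" "u \<noteq> \<one>\<^bsub>T\<^esub>"
  and t: "t \<in> {..<k} \<rightarrow>\<^sub>E carrier T"
  and base: "is_base (k+1) T {Dgrp (k+1) T, Dcoset (k+1) T (phi_elem (k+1) T t)}"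
  shows "t \<in> {..<k} \<rightarrow>\<^sub>E (carrier T - {\<one>\<^bsub>T\<^esub>}) \<and> inj_on t {..<k}
         \<and> setstab T (t ` {..<k}) = {(\<lambda>x\<in>carrier T. x)}"
proof -
  define \<beta> where "\<beta> = (\<lambda>i. if i < k then inn T (t i) else (\<lambda>x\<in>carrier T. x))"
  have xw: "phi_elem (k+1) T t = wr_elem (k+1) T \<beta> id" by (simp add: phi_elem_def \<beta>_def)
  have tc: "t i \<in> carrier T" if "i < k" for i using t that by auto
  have \<beta>f: "\<forall>i<k+1. \<beta> i \<in> carrier T \<rightarrow> carrier T"
    using tc grp by (auto simp: \<beta>_def inn_apply group.inv_closed monoid.m_closed[OF group.is_monoid[OF grp]])
  have one: "\<forall>i<k. t i \<noteq> \<one>\<^bsub>T\<^esub>"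
  proof (intro allI impI notI)
    fix i assume i: "i < k" and ti: "t i = \<one>\<^bsub>T\<^esub>"
    have "\<forall>y\<in>carrier T. \<beta> i y = \<beta> k y"
      using i ti grp by (simp add: \<beta>_def inn_apply monoid.inv_one[OF group.is_monoid[OF grp]] monoid.l_one[OF group.is_monoid[OF grp]] monoid.r_one[OF group.is_monoid[OF grp]])
    then show False using swap_case[OF grp fin u xw \<beta>f, of i k] i base by simp
  qed
  have inj: "inj_on t {..<k}"
  proof (rule ccontr)
    assume "\<not> inj_on t {..<k}"
    then obtain i j where ij: "i < k" "j < k" "i \<noteq> j" "t i = t j" unfolding inj_on_def by auto
    have "\<forall>y\<in>carrier T. \<beta> i y = \<beta> j y" using ij by (simp add: \<beta>_def)
    then show False using swap_case[OF grp fin u xw \<beta>f, of i j] ij base by simp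
  qed
  have stab: "setstab T (t ` {..<k}) = {(\<lambda>x\<in>carrier T. x)}"
  proof
    show "{(\<lambda>x\<in>carrier T. x)} \<subseteq> setstab T (t ` {..<k})"
      using group.id_in_auto[OF grp] tc by (auto simp: setstab_def)
    show "setstab T (t ` {..<k}) \<subseteq> {(\<lambda>x\<in>carrier T. x)}"
    proof
      fix \<alpha> assume a: "\<alpha> \<in> setstab T (t ` {..<k})"
      show "\<alpha> \<in> {(\<lambda>x\<in>carrier T. x)}"
      proof (rule ccontr)
        assume "\<alpha> \<notin> {(\<lambda>x\<in>carrier T. x)}"
        then show False using stab_case[OF grp fin t inj a _ xw \<beta>_def] base by auto
      qed
    qed
  qed
  have "t \<in> {..<k} \<rightarrow>\<^sub>E (carrier T - {\<one>\<^bsub>T\<^esub>})" using t one by (auto simp: PiE_def Pi_def)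
  then show ?thesis using inj stab by blast
qed

lemma fiber_card:
  assumes "R \<subseteq> C1" "card R = k" "finite R"
  shows "card {t \<in> {..<k} \<rightarrow>\<^sub>E C1. inj_on t {..<k} \<and> t ` {..<k} = R} = prod ((-) k) {0..<k}"
proof -
  have "{t \<in> {..<k} \<rightarrow>\<^sub>E C1. inj_on t {..<k} \<and> t ` {..<k} = R} = {t \<in> {..<k} \<rightarrow>\<^sub>E R. inj_on t {..<k}}"
  proof (rule equalityI; rule subsetI)
    fix t assume "t \<in> {t \<in> {..<k} \<rightarrow>\<^sub>E C1. inj_on t {..<k} \<and> t ` {..<k} = R}"
    then show "t \<in> {t \<in> {..<k} \<rightarrow>\<^sub>E R. inj_on t {..<k}}" by (auto simp: PiE_def Pi_def)
  next
    fix t assume t: "t \<in> {t \<in> {..<k} \<rightarrow>\<^sub>E R. inj_on t {..<k}}"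
    then have sub: "t ` {..<k} \<subseteq> R" by auto
    have "card (t ` {..<k}) = k" using t by (simp add: card_image)
    then have "t ` {..<k} = R" using sub assms by (simp add: card_subset_eq)
    then show "t \<in> {t \<in> {..<k} \<rightarrow>\<^sub>E C1. inj_on t {..<k} \<and> t ` {..<k} = R}"
      using t assms(1) by (auto simp: PiE_def Pi_def)
  qed
  also have "card \<dots> = prod ((-) k) {0..<k}"
    using card_inj_on_subset_funcset[of "{..<k}" R "{..<k}"] assms by simp
  finally show ?thesis .
qed

lemma count_sub:
  assumes fin: "finite C1" and S: "S \<subseteq> {R. R \<subseteq> C1 \<and> card R = k}"
  shows "card {t \<in> {..<k} \<rightarrow>\<^sub>E C1. inj_on t {..<k} \<and> t ` {..<k} \<in> S} = card S * prod ((-) k) {0..<k}"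
proof -
  define F where "F R = {t \<in> {..<k} \<rightarrow>\<^sub>E C1. inj_on t {..<k} \<and> t ` {..<k} = R}" for R
  have eq: "{t \<in> {..<k} \<rightarrow>\<^sub>E C1. inj_on t {..<k} \<and> t ` {..<k} \<in> S} = (\<Union>R\<in>S. F R)"
    by (auto simp: F_def)
  have finS: "finite S" using S fin by (intro finite_subset[of S "Pow C1"]) auto
  have finF: "finite (F R)" for R
    using fin finite_PiE[of "{..<k}" "\<lambda>_. C1"] unfolding F_def by (auto intro: finite_subset[rotated])
  have "card (\<Union>R\<in>S. F R) = (\<Sum>R\<in>S. card (F R))"
    using finF by (intro card_UN_disjoint[OF finS]) (auto simp: F_def)
  also have "\<dots> = (\<Sum>R\<in>S. prod ((-) k) {0..<k})"
  proof (rule sum.cong[OF refl])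
    fix R assume "R \<in> S"
    then have R: "R \<subseteq> C1" "card R = k" using S by auto
    then have "finite R" using fin finite_subset by blast
    note R = R this
    then show "card (F R) = prod ((-) k) {0..<k}" unfolding F_def using fiber_card by blast
  qed
  finally show ?thesis using eq by simp
qed

theorem lemma6p2:
  fixes T :: "('a, 'b) monoid_scheme" and k :: nat
  assumes "simple_group T" and "finite (carrier T)" and "\<not> comm_group T" and "k \<ge> 4"
  shows "QQ k T \<le> 1 - PP (k + 1) T"
proof -
  have grp: "group T" using assms(1) by (simp add: simple_group_def)
  have fin: "finite (carrier T)" by fact
  obtain u where u: "u \<in> carrier T" "u \<noteq> \<one>\<^bsub>T\<^esub>"
  proof (rule ccontr)
    assume "\<not> thesis"
    then have sub: "carrier T \<subseteq> {\<one>\<^bsub>T\<^esub>}" using that by auto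
    have "comm_group T"
    proof (rule group.group_comm_groupI[OF grp])
      fix x y assume "x \<in> carrier T" "y \<in> carrier T"
      then show "x \<otimes>\<^bsub>T\<^esub> y = y \<otimes>\<^bsub>T\<^esub> x" using sub by auto
    qed
    then show False using assms(3) by simp
  qed
  define C1 where "C1 = carrier T - {\<one>\<^bsub>T\<^esub>}"
  define K where "K = {..<k}"
  define c where "c = prod ((-) k) {0..<k}"
  define Good where "Good = {R \<in> ksubsets T k. setstab T R = {(\<lambda>x\<in>carrier T. x)}}"
  define Bad where "Bad = {R \<in> ksubsets T k. setstab T R \<noteq> {(\<lambda>x\<in>carrier T. x)}}"
  define BS where "BS = {t \<in> {..<k} \<rightarrow>\<^sub>E carrier T.
                  is_base (k+1) T {Dgrp (k+1) T, Dcoset (k+1) T (phi_elem (k+1) T t)}}"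
  define n where "n = card (carrier T)"
  have finC1: "finite C1" using fin by (simp add: C1_def)
  have ks: "ksubsets T k = {R. R \<subseteq> C1 \<and> card R = k}" by (simp add: ksubsets_def C1_def)
  have "ksubsets T k \<subseteq> Pow C1" unfolding ks by blast
  then have finks: "finite (ksubsets T k)" using finC1 by (meson finite_Pow_iff finite_subset)
  have GoodS: "Good \<subseteq> {R. R \<subseteq> C1 \<and> card R = k}" using ks by (auto simp: Good_def)
  have BSsub: "BS \<subseteq> {t \<in> {..<k} \<rightarrow>\<^sub>E C1. inj_on t {..<k} \<and> t ` {..<k} \<in> Good}"
  proof
    fix t assume "t \<in> BS"
    then have t: "t \<in> {..<k} \<rightarrow>\<^sub>E carrier T"
      and b: "is_base (k+1) T {Dgrp (k+1) T, Dcoset (k+1) T (phi_elem (k+1) T t)}"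
      by (auto simp: BS_def)
    have g: "t \<in> {..<k} \<rightarrow>\<^sub>E C1" "inj_on t {..<k}" "setstab T (t ` {..<k}) = {(\<lambda>x\<in>carrier T. x)}"
      using base_good[OF grp fin u t b] by (auto simp: C1_def)
    have "t ` {..<k} \<in> ksubsets T k" using g(1,2) unfolding ks by (auto simp: card_image)
    then show "t \<in> {t \<in> {..<k} \<rightarrow>\<^sub>E C1. inj_on t {..<k} \<and> t ` {..<k} \<in> Good}"
      using g by (auto simp: Good_def)
  qed
  have finI: "finite {t \<in> {..<k} \<rightarrow>\<^sub>E C1. inj_on t {..<k} \<and> t ` {..<k} \<in> Good}"
    using finC1 finite_PiE[of "{..<k}" "\<lambda>_. C1"] by (auto intro: finite_subset[rotated])
  have BSle: "card BS \<le> card Good * c"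
    using card_mono[OF finI BSsub] count_sub[OF finC1 GoodS] by (simp add: c_def)
  have Iall: "card {t \<in> {..<k} \<rightarrow>\<^sub>E C1. inj_on t {..<k} \<and> t ` {..<k} \<in> ksubsets T k}
      = card (ksubsets T k) * c"
    using count_sub[OF finC1, of "ksubsets T k"] ks by (simp add: c_def)
  have "card {t \<in> {..<k} \<rightarrow>\<^sub>E C1. inj_on t {..<k} \<and> t ` {..<k} \<in> ksubsets T k}
        \<le> card ({..<k} \<rightarrow>\<^sub>E carrier T)"
    using fin by (intro card_mono finite_PiE) (auto simp: C1_def PiE_def Pi_def)
  also have "\<dots> = n ^ k" using card_funcsetE[of "{..<k}" "carrier T"] by (simp add: n_def)
  finally have Nle: "card (ksubsets T k) * c \<le> n ^ k" using Iall by simp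
  have npos: "n > 0" using u fin by (auto simp: n_def card_gt_0_iff)
  have part: "card Bad + card Good = card (ksubsets T k)"
  proof -
    have "Bad \<union> Good = ksubsets T k" "Bad \<inter> Good = {}" by (auto simp: Bad_def Good_def)
    moreover have "finite Bad" "finite Good" using finks by (auto simp: Bad_def Good_def)
    ultimately show ?thesis by (metis card_Un_disjoint)
  qed
  have QQe: "QQ k T = real (card Bad) / real (card (ksubsets T k))" by (simp add: QQ_def Bad_def)
  have PPe: "PP (k+1) T = real (card BS) / real n ^ k" by (simp add: PP_def BS_def n_def)
  show ?thesis
  proof (cases "card (ksubsets T k) = 0")
    case True
    then have "card Good = 0" using part by simp
    then have "card BS = 0" using BSle by simp
    then show ?thesis using True QQe PPe by simp
  next
    case False
    define N where "N = card (ksubsets T k)"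
    define G where "G = card Good"
    have Np: "real N > 0" using False by (simp add: N_def)
    have nk: "real n ^ k > 0" using npos by simp
    have "1 - QQ k T = real G / real N" using QQe part Np unfolding N_def G_def
      by (simp add: field_simps)
    moreover have "PP (k+1) T \<le> real G / real N"
    proof -
      have r: "real (card BS) \<le> real (G * c)" using BSle unfolding G_def by (rule of_nat_mono)
      have "PP (k+1) T \<le> real (G * c) / real n ^ k" unfolding PPe
        using divide_right_mono[OF r, of "real n ^ k"] nk by simp
      also have "\<dots> \<le> real G / real N"
      proof -
        have "real N * real c \<le> real n ^ k" using Nle unfolding N_def
          by (metis of_nat_le_iff of_nat_mult of_nat_power mult.commute)
        then have "real G * (real N * real c) \<le> real G * real n ^ k" by (simp add: mult_left_mono)
        then show ?thesis using Np nk by (simp add: field_simps)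
      qed
      finally show ?thesis .
    qed
    ultimately show ?thesis by simp
  qed
qed

end
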